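(* Let $p<1$, let $k$ be an integer, and let $Y$ be the number of vertices of degree at most $k$ in $\mathcal G(n,p)$. Then $\operatorname{Var}(Y)\le(\mathbb E Y)^2\big(p/(1-p)+1/\mathbb E Y\big)$.
   Context: $\mathcal G(n,p)$ is the Erdős–Rényi random graph on $[n]$, each edge present independently with probability $p$. *)

theory Defs
  imports "HOL-Probability.Probability"
begin

text \<open>Vertex set [n] is represented as {0..<n}. Potential edges are pairs (i,j) with i<j<n.\<close>
definition gnp_edges :: "nat \<Rightarrow> (nat \<times> nat) set" where
  "gnp_edges n = {(i, j). i < j \<and> j < n}"

definition gnp :: "nat \<Rightarrow> real \<Rightarrow> (nat \<times> nat \<Rightarrow> bool) pmf" where
  "gnp n p = Pi_pmf (gnp_edges n) False (\<lambda>_. bernoulli_pmf p)"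

definition adj :: "(nat \<times> nat \<Rightarrow> bool) \<Rightarrow> nat \<Rightarrow> nat \<Rightarrow> bool" where
  "adj G u v = (u \<noteq> v \<and> G (min u v, max u v))"

definition degree :: "nat \<Rightarrow> (nat \<times> nat \<Rightarrow> bool) \<Rightarrow> nat \<Rightarrow> nat" where
  "degree n G v = card {u. u < n \<and> adj G u v}"

definition num_low_deg :: "nat \<Rightarrow> int \<Rightarrow> (nat \<times> nat \<Rightarrow> bool) \<Rightarrow> real" where
  "num_low_deg n k G = real (card {v. v < n \<and> int (degree n G v) \<le> k})"

end

theory Submission imports Defs begin

definition dep_on :: "'a set \<Rightarrow> (('a \<Rightarrow> 'b) \<Rightarrow> bool) \<Rightarrow> bool" where
  "dep_on A X \<longleftrightarrow> (\<forall>f g. (\<forall>x\<in>A. f x = g x) \<longrightarrow> X f = X g)"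

lemma prob_pair_times:
  "measure_pmf.prob (pair_pmf M N) (A \<times> B) = measure_pmf.prob M A * measure_pmf.prob N B"
proof -
  have "measure_pmf.prob (pair_pmf M N) (A \<times> B) = measure_pmf.prob (pair_pmf M N) ((A \<times> B) \<inter> set_pmf (pair_pmf M N))"
    by (rule measure_Int_set_pmf[symmetric])
  also have "(A \<times> B) \<inter> set_pmf (pair_pmf M N) = (A \<inter> set_pmf M) \<times> (B \<inter> set_pmf N)" by auto
  also have "measure_pmf.prob (pair_pmf M N) \<dots> = measure_pmf.prob M (A \<inter> set_pmf M) * measure_pmf.prob N (B \<inter> set_pmf N)"
    by (rule measure_pmf_prob_product) auto
  finally show ?thesis by (simp add: measure_Int_set_pmf)
qed

lemma prob_Pi_union:
  assumes "finite A" "finite B" "A \<inter> B = {}" "dep_on A X" "dep_on B Y"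
  shows "measure_pmf.prob (Pi_pmf (A \<union> B) dflt q) {f. X f \<and> Y f}
     = measure_pmf.prob (Pi_pmf A dflt q) {f. X f} * measure_pmf.prob (Pi_pmf B dflt q) {f. Y f}"
proof -
  have "(\<lambda>(f,g) x. if x \<in> A then f x else g x) -` {f. X f \<and> Y f} = {f. X f} \<times> {g. Y g}"
  proof -
    have "X (\<lambda>x. if x \<in> A then f x else g x) = X f" for f g
      using assms(4) unfolding dep_on_def by simp
    moreover have "Y (\<lambda>x. if x \<in> A then f x else g x) = Y g" for f g
      using assms(5,3) unfolding dep_on_def
      by (smt (verit) disjoint_iff)
    ultimately show ?thesis by auto
  qed
  then show ?thesis
    using assms by (simp add: Pi_pmf_union prob_pair_times)
qed

lemma dep_on_mono: "dep_on A X \<Longrightarrow> A \<subseteq> B \<Longrightarrow> dep_on B X"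
  unfolding dep_on_def by blast

lemma dep_on_True: "dep_on A (\<lambda>_. True)"
  unfolding dep_on_def by blast

lemma prob_Pi_indep:
  assumes "finite E" "A \<subseteq> E" "B \<subseteq> E" "A \<inter> B = {}" "dep_on A X" "dep_on B Y"
  shows "measure_pmf.prob (Pi_pmf E dflt q) {f. X f \<and> Y f}
     = measure_pmf.prob (Pi_pmf E dflt q) {f. X f} * measure_pmf.prob (Pi_pmf E dflt q) {f. Y f}"
proof -
  have E: "E = A \<union> (E - A)" using assms by auto
  have fA: "finite A" "finite (E - A)" using assms finite_subset by auto
  have dY: "dep_on (E - A) Y" using assms by (auto intro: dep_on_mono)
  have 1: "measure_pmf.prob (Pi_pmf E dflt q) {f. X f \<and> Y f}
     = measure_pmf.prob (Pi_pmf A dflt q) {f. X f} * measure_pmf.prob (Pi_pmf (E-A) dflt q) {f. Y f}"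
    by (subst E, rule prob_Pi_union) (use fA assms dY in auto)
  have 2: "measure_pmf.prob (Pi_pmf E dflt q) {f. X f \<and> True}
     = measure_pmf.prob (Pi_pmf A dflt q) {f. X f} * measure_pmf.prob (Pi_pmf (E-A) dflt q) {f. True}"
    by (subst E, rule prob_Pi_union) (use fA assms dep_on_True in auto)
  have 3: "measure_pmf.prob (Pi_pmf E dflt q) {f. True \<and> Y f}
     = measure_pmf.prob (Pi_pmf A dflt q) {f. True} * measure_pmf.prob (Pi_pmf (E-A) dflt q) {f. Y f}"
    by (subst E, rule prob_Pi_union) (use fA assms dY dep_on_True in auto)
  show ?thesis using 1 2 3 by simp
qed


lemma prob_split:
  "measure_pmf.prob M {x. X x \<and> Y x} + measure_pmf.prob M {x. \<not> X x \<and> Y x} = measure_pmf.prob M {x. Y x}"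
proof -
  have "{x. Y x} = {x. X x \<and> Y x} \<union> {x. \<not> X x \<and> Y x}" by auto
  moreover have "measure_pmf.prob M ({x. X x \<and> Y x} \<union> {x. \<not> X x \<and> Y x}) = measure_pmf.prob M {x. X x \<and> Y x} + measure_pmf.prob M {x. \<not> X x \<and> Y x}"
    by (rule measure_pmf.finite_measure_Union) auto
  ultimately show ?thesis by simp
qed

definition dd :: "nat \<Rightarrow> (nat \<times> nat \<Rightarrow> bool) \<Rightarrow> nat \<Rightarrow> nat \<Rightarrow> nat" where
  "dd n G x y = card {w. w < n \<and> w \<noteq> y \<and> adj G w x}"

definition Inc :: "nat \<Rightarrow> nat \<Rightarrow> nat \<Rightarrow> (nat \<times> nat) set" where
  "Inc n x y = {z \<in> gnp_edges n. z \<noteq> (min x y, max x y) \<and> (fst z = x \<or> snd z = x)}"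

lemma finite_edges: "finite (gnp_edges n)"
proof -
  have "gnp_edges n \<subseteq> {..<n} \<times> {..<n}" by (auto simp: gnp_edges_def)
  then show ?thesis by (rule finite_subset) auto
qed

lemma deg_split:
  assumes "u \<noteq> v" "v < n"
  shows "degree n G u = dd n G u v + (if G (min u v, max u v) then 1 else 0)"
proof -
  let ?S = "{w. w < n \<and> w \<noteq> v \<and> adj G w u}"
  have fin: "finite ?S" by (rule finite_subset[of _ "{..<n}"]) auto
  show ?thesis
  proof (cases "G (min u v, max u v)")
    case True
    then have "{w. w < n \<and> adj G w u} = insert v ?S"
      using assms by (auto simp: adj_def min_def max_def)
    then show ?thesis using True fin by (simp add: degree_def dd_def)
  next
    case False
    then have "{w. w < n \<and> adj G w u} = ?S"
      using assms by (auto simp: adj_def min_def max_def)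
    then show ?thesis using False by (simp add: degree_def dd_def)
  qed
qed

lemma dep_dd: "u < n \<Longrightarrow> dep_on (Inc n u v) (\<lambda>G. P (dd n G u v))"
  unfolding dep_on_def
proof (intro allI impI)
  assume un: "u < n"
  fix G H :: "nat \<times> nat \<Rightarrow> bool"
  assume ag: "\<forall>x\<in>Inc n u v. G x = H x"
  have "{w. w < n \<and> w \<noteq> v \<and> adj G w u} = {w. w < n \<and> w \<noteq> v \<and> adj H w u}"
  proof -
    have "adj G w u = adj H w u" if "w < n" "w \<noteq> v" for w
    proof (cases "w = u")
      case False
      have "(min w u, max w u) \<in> Inc n u v"
        using that False un by (auto simp: Inc_def gnp_edges_def min_def max_def split: if_splits)
      then show ?thesis using ag by (simp add: adj_def)
    qed (simp add: adj_def)
    then show ?thesis by auto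
  qed
  then show "P (dd n G u v) = P (dd n H u v)" by (simp add: dd_def)
qed

lemma dep_edge: "dep_on {e} (\<lambda>G. P (G e))"
  unfolding dep_on_def by auto

lemma Inc_disj: "u \<noteq> v \<Longrightarrow> Inc n u v \<inter> Inc n v u = {}"
  by (auto simp: Inc_def gnp_edges_def min_def max_def)

lemma Inc_sub: "Inc n u v \<subseteq> gnp_edges n"
  by (auto simp: Inc_def)

lemma Inc_e: "(min u v, max u v) \<notin> Inc n u v" "(min u v, max u v) \<notin> Inc n v u"
  by (auto simp: Inc_def min_def max_def)

lemma e_in: "u \<noteq> v \<Longrightarrow> u < n \<Longrightarrow> v < n \<Longrightarrow> (min u v, max u v) \<in> gnp_edges n"
  by (auto simp: gnp_edges_def min_def max_def)

lemma prob_edge: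
  assumes "0 \<le> p" "p \<le> 1" "e \<in> gnp_edges n"
  shows "measure_pmf.prob (gnp n p) {G. G e} = p"
proof -
  have "map_pmf (\<lambda>f. f e) (gnp n p) = bernoulli_pmf p"
    using assms by (simp add: gnp_def Pi_pmf_component finite_edges)
  then have "measure_pmf.prob (map_pmf (\<lambda>f. f e) (gnp n p)) {True} = p"
    using assms by (simp add: measure_pmf_single)
  moreover have "(\<lambda>f. f e) -` {True} = {G. G e}" by auto
  ultimately show ?thesis by simp
qed

lemma indep_gnp:
  assumes "A \<subseteq> gnp_edges n" "B \<subseteq> gnp_edges n" "A \<inter> B = {}" "dep_on A X" "dep_on B Y"
  shows "measure_pmf.prob (gnp n p) {f. X f \<and> Y f}
     = measure_pmf.prob (gnp n p) {f. X f} * measure_pmf.prob (gnp n p) {f. Y f}"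
  unfolding gnp_def by (rule prob_Pi_indep) (use assms finite_edges in auto)


lemma dep_on_conj: "dep_on A X \<Longrightarrow> dep_on B Y \<Longrightarrow> dep_on (A \<union> B) (\<lambda>f. X f \<and> Y f)"
  unfolding dep_on_def by (metis UnCI)

lemma decomp:
  assumes p: "0 \<le> p" "p \<le> 1" and e: "e \<in> gnp_edges n" "e \<notin> D" and D: "D \<subseteq> gnp_edges n"
    and d1: "dep_on D R1" and d2: "dep_on D R2"
  shows "measure_pmf.prob (gnp n p) {G. (G e \<and> R1 G) \<or> (\<not> G e \<and> R2 G)}
     = p * measure_pmf.prob (gnp n p) {G. R1 G} + (1 - p) * measure_pmf.prob (gnp n p) {G. R2 G}"
proof -
  let ?P = "measure_pmf.prob (gnp n p)"
  have "?P ({G. G e \<and> R1 G} \<union> {G. \<not> G e \<and> R2 G}) = ?P {G. G e \<and> R1 G} + ?P {G. \<not> G e \<and> R2 G}"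
    by (rule measure_pmf.finite_measure_Union) auto
  moreover have "{G. (G e \<and> R1 G) \<or> (\<not> G e \<and> R2 G)} = {G. G e \<and> R1 G} \<union> {G. \<not> G e \<and> R2 G}" by auto
  moreover have "?P {G. G e \<and> R1 G} = ?P {G. G e} * ?P {G. R1 G}"
    by (rule indep_gnp[where A="{e}" and B=D and X="\<lambda>G. G e" and Y=R1]) (use e D d1 dep_edge in auto)
  moreover have "?P {G. \<not> G e \<and> R2 G} = ?P {G. \<not> G e} * ?P {G. R2 G}"
    by (rule indep_gnp[where A="{e}" and B=D and X="\<lambda>G. \<not> G e" and Y=R2]) (use e D d2 dep_edge in auto)
  moreover have "?P {G. G e} = p" using prob_edge p e by auto
  moreover have "?P {G. \<not> G e} = 1 - p"
  proof -
    have "?P {G. G e \<and> True} + ?P {G. \<not> G e \<and> True} = ?P {G. True}" by (rule prob_split)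
    then show ?thesis using prob_edge[OF p e(1)] by (simp add: measure_pmf.prob_space)
  qed
  ultimately show ?thesis by simp
qed

lemma key_ineq:
  fixes p a b c d :: real
  assumes "0 \<le> p" "p \<le> 1" "0 \<le> b" "b \<le> a" "0 \<le> d" "d \<le> c"
  shows "(1 - p) * (p * (b * d) + (1 - p) * (a * c)) \<le> (p * b + (1 - p) * a) * (p * d + (1 - p) * c)"
proof -
  have "(p * b + (1 - p) * a) * (p * d + (1 - p) * c) - (1 - p) * (p * (b * d) + (1 - p) * (a * c))
      = p*p*(b*d) + p*(1-p)*(b*c + a*d - b*d)" by (simp add: algebra_simps)
  moreover have "b*c \<ge> b*d" using assms by (simp add: mult_left_mono)
  moreover have "a*d \<ge> 0" using assms by simp
  moreover have "p*p*(b*d) \<ge> 0" using assms by simp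
  moreover have "b*c+a*d-b*d \<ge> 0" using calculation by linarith
  moreover have "p*(1-p) \<ge> 0" using assms by simp
  moreover have "p*(1-p)*(b*c+a*d-b*d) \<ge> 0"
    using calculation mult_nonneg_nonneg by blast
  ultimately have "(p * b + (1 - p) * a) * (p * d + (1 - p) * c) - (1 - p) * (p * (b * d) + (1 - p) * (a * c)) \<ge> 0"
    by linarith
  then show ?thesis by simp
qed

lemma pair_bound:
  assumes p: "0 \<le> p" "p \<le> 1" and uv: "u \<noteq> v" "u < n" "v < n"
  shows "(1 - p) * measure_pmf.prob (gnp n p) {G. int (degree n G u) \<le> k \<and> int (degree n G v) \<le> k}
    \<le> measure_pmf.prob (gnp n p) {G. int (degree n G u) \<le> k} * measure_pmf.prob (gnp n p) {G. int (degree n G v) \<le> k}"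
proof -
  let ?P = "measure_pmf.prob (gnp n p)"
  define e where "e = (min u v, max u v)"
  have e': "(min v u, max v u) = e" by (simp add: e_def min.commute max.commute)
  have eE: "e \<in> gnp_edges n" using e_in uv by (simp add: e_def)
  have du: "degree n G u = dd n G u v + (if G e then 1 else 0)" for G
    using deg_split[of u v n G] uv by (simp add: e_def)
  have dv: "degree n G v = dd n G v u + (if G e then 1 else 0)" for G
    using deg_split[of v u n G] uv e' by simp
  define a where "a = ?P {G. int (dd n G u v) \<le> k}"
  define b where "b = ?P {G. int (dd n G u v) \<le> k - 1}"
  define c where "c = ?P {G. int (dd n G v u) \<le> k}"
  define d where "d = ?P {G. int (dd n G v u) \<le> k - 1}"
  have eu: "e \<notin> Inc n u v" and ev: "e \<notin> Inc n v u" using Inc_e[of u v n] by (auto simp: e_def min.commute max.commute)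
  have Pu: "?P {G. int (degree n G u) \<le> k} = p * b + (1 - p) * a"
  proof -
    have "{G. int (degree n G u) \<le> k} = {G. (G e \<and> int (dd n G u v) \<le> k - 1) \<or> (\<not> G e \<and> int (dd n G u v) \<le> k)}"
      by (auto simp: du)
    then show ?thesis unfolding a_def b_def
      by (simp only:) (rule decomp[OF p eE eu Inc_sub dep_dd dep_dd]; use uv in simp)
  qed
  have Pv: "?P {G. int (degree n G v) \<le> k} = p * d + (1 - p) * c"
  proof -
    have "{G. int (degree n G v) \<le> k} = {G. (G e \<and> int (dd n G v u) \<le> k - 1) \<or> (\<not> G e \<and> int (dd n G v u) \<le> k)}"
      by (auto simp: dv)
    then show ?thesis unfolding c_def d_def
      by (simp only:) (rule decomp[OF p eE ev Inc_sub dep_dd dep_dd]; use uv in simp)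
  qed
  have DD: "dep_on (Inc n u v \<union> Inc n v u) (\<lambda>G. int (dd n G u v) \<le> j \<and> int (dd n G v u) \<le> j)" for j
    by (rule dep_on_conj; rule dep_dd) (use uv in auto)
  have ind: "?P {G. int (dd n G u v) \<le> j \<and> int (dd n G v u) \<le> j}
      = ?P {G. int (dd n G u v) \<le> j} * ?P {G. int (dd n G v u) \<le> j}" for j
    by (rule indep_gnp[where A="Inc n u v" and B="Inc n v u"]) (use Inc_sub Inc_disj dep_dd uv in auto)
  have J: "?P {G. int (degree n G u) \<le> k \<and> int (degree n G v) \<le> k} = p * (b * d) + (1 - p) * (a * c)"
  proof -
    have "{G. int (degree n G u) \<le> k \<and> int (degree n G v) \<le> k} =
      {G. (G e \<and> (int (dd n G u v) \<le> k - 1 \<and> int (dd n G v u) \<le> k - 1)) \<or> (\<not> G e \<and> (int (dd n G u v) \<le> k \<and> int (dd n G v u) \<le> k))}"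
      by (auto simp: du dv)
    moreover have "?P \<dots> = p * ?P {G. int (dd n G u v) \<le> k - 1 \<and> int (dd n G v u) \<le> k - 1}
         + (1 - p) * ?P {G. int (dd n G u v) \<le> k \<and> int (dd n G v u) \<le> k}"
      by (rule decomp[OF p eE _ _ DD DD]) (use eu ev Inc_sub in auto)
    ultimately have "?P {G. int (degree n G u) \<le> k \<and> int (degree n G v) \<le> k} = p * ?P {G. int (dd n G u v) \<le> k - 1 \<and> int (dd n G v u) \<le> k - 1}
         + (1 - p) * ?P {G. int (dd n G u v) \<le> k \<and> int (dd n G v u) \<le> k}" by (simp only:)
    then show ?thesis unfolding a_def b_def c_def d_def by (simp only: ind)
  qed
  have "b \<le> a" unfolding a_def b_def by (rule measure_pmf.finite_measure_mono) auto
  moreover have "d \<le> c" unfolding c_def d_def by (rule measure_pmf.finite_measure_mono) auto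
  ultimately show ?thesis unfolding Pu Pv J
    by (intro key_ineq) (use p in \<open>auto simp: b_def d_def\<close>)
qed


lemma exp_bool: "measure_pmf.expectation M (\<lambda>x. of_bool (Q x) :: real) = measure_pmf.prob M {x. Q x}"
proof -
  have "(\<lambda>x. of_bool (Q x) :: real) = indicator {x. Q x}" by (auto simp: indicator_def)
  then show ?thesis by simp
qed

lemma fin_gnp: "finite (set_pmf (gnp n p))"
proof -
  have "set_pmf (gnp n p) \<subseteq> PiE_dflt (gnp_edges n) False (set_pmf \<circ> (\<lambda>_. bernoulli_pmf p))"
    unfolding gnp_def by (rule set_Pi_pmf_subset'[OF finite_edges])
  moreover have "finite (PiE_dflt (gnp_edges n) False (set_pmf \<circ> (\<lambda>_. bernoulli_pmf p)))"
    by (rule finite_PiE_dflt[OF finite_edges]) auto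
  ultimately show ?thesis by (rule finite_subset)
qed

theorem lemma4p6:
  fixes n :: nat and p :: real and k :: int
  assumes "0 \<le> p" and "p < 1"
  defines "EY \<equiv> measure_pmf.expectation (gnp n p) (num_low_deg n k)"
  shows "measure_pmf.variance (gnp n p) (num_low_deg n k) \<le> EY ^ 2 * (p / (1 - p) + 1 / EY)"
proof -
  let ?M = "gnp n p"
  let ?P = "measure_pmf.prob ?M"
  define Q where "Q v G \<longleftrightarrow> int (degree n G v) \<le> k" for v G
  define Pr where "Pr v = ?P {G. Q v G}" for v
  define J where "J u v = ?P {G. Q u G \<and> Q v G}" for u v
  have int: "integrable ?M f" for f :: "_ \<Rightarrow> real"
    by (rule integrable_measure_pmf_finite[OF fin_gnp])
  have Y: "num_low_deg n k G = (\<Sum>v<n. of_bool (Q v G))" for G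
  proof -
    have "{v. v < n \<and> int (degree n G v) \<le> k} = {..<n} \<inter> {v. Q v G}" by (auto simp: Q_def)
    then show ?thesis by (simp add: num_low_deg_def)
  qed
  have Y2: "(num_low_deg n k G)^2 = (\<Sum>u<n. \<Sum>v<n. of_bool (Q u G \<and> Q v G))" for G
    unfolding Y power2_eq_square sum_product by (intro sum.cong refl) auto
  have EYs: "EY = (\<Sum>v<n. Pr v)"
    unfolding EY_def Y by (simp add: int Pr_def exp_bool del: sum_of_bool_eq)
  have EY2: "measure_pmf.expectation ?M (\<lambda>G. (num_low_deg n k G)^2) = (\<Sum>u<n. \<Sum>v<n. J u v)"
    unfolding Y2 by (simp add: int J_def exp_bool del: sum_of_bool_eq)
  have var: "measure_pmf.variance ?M (num_low_deg n k) = (\<Sum>u<n. \<Sum>v<n. J u v) - EY^2"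
    by (subst measure_pmf.variance_eq) (auto simp: int EY2 EY_def)
  have p1: "1 - p > 0" using assms by simp
  have Jb: "J u v \<le> Pr u * Pr v / (1 - p) + of_bool (u = v) * Pr v" if "u < n" "v < n" for u v
  proof (cases "u = v")
    case True
    have "Pr u * Pr u / (1 - p) \<ge> 0" using p1 by (simp add: Pr_def)
    then show ?thesis using True by (simp add: J_def Pr_def)
  next
    case False
    have "(1 - p) * J u v \<le> Pr u * Pr v"
      unfolding J_def Pr_def Q_def by (rule pair_bound) (use assms False that in auto)
    then have "J u v \<le> Pr u * Pr v / (1 - p)" using p1 by (simp add: field_simps)
    then show ?thesis using False by simp
  qed
  have "(\<Sum>u<n. \<Sum>v<n. J u v) \<le> (\<Sum>u<n. \<Sum>v<n. Pr u * Pr v / (1 - p) + of_bool (u = v) * Pr v)"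
    by (intro sum_mono Jb) auto
  also have "\<dots> = EY^2 / (1 - p) + EY"
  proof -
    have "(\<Sum>u<n. \<Sum>v<n. of_bool (u = v) * Pr v) = (\<Sum>u<n. Pr u)"
    proof (intro sum.cong refl)
      fix u assume "u \<in> {..<n}"
      have "(\<Sum>v<n. of_bool (u = v) * Pr v) = (\<Sum>v<n. if u = v then Pr v else 0)"
        by (intro sum.cong refl) simp
      also have "\<dots> = Pr u" using \<open>u \<in> {..<n}\<close> by (simp add: sum.delta)
      finally show "(\<Sum>v<n. of_bool (u = v) * Pr v) = Pr u" .
    qed
    moreover have "(\<Sum>u<n. \<Sum>v<n. Pr u * Pr v / (1 - p)) = EY^2 / (1 - p)"
      unfolding EYs power2_eq_square sum_product sum_divide_distrib by simp
    ultimately show ?thesis by (simp add: sum.distrib EYs)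
  qed
  finally have "measure_pmf.variance ?M (num_low_deg n k) \<le> EY^2 / (1 - p) - EY^2 + EY"
    using var by simp
  also have "EY^2 / (1 - p) - EY^2 = EY^2 * (p / (1 - p))"
    using p1 by (simp add: field_simps)
  finally have V: "measure_pmf.variance ?M (num_low_deg n k) \<le> EY^2 * (p / (1 - p)) + EY" .
  have "EY^2 * (1 / EY) = EY" by (simp add: power2_eq_square)
  then show ?thesis using V by (simp only: distrib_left)
qed

end
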